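(* In a star-shaped zero-sum network game with center player $1$ (i.e. $r_{i,j}=0$ whenever $i\neq1$ and $j\neq1$), the Nash equilibrium value of the center player is unique: for any two Nash equilibria $\pi,\pi'$ of the game, $r_1(\pi)=r_1(\pi')$.
   Context: Players $\mathcal N=[n]$ with finite action sets $\mathcal A_i$ and pairwise matrices $r_{1,i}\in\mathbb R^{|\mathcal A_1|\times|\mathcal A_i|}$, $r_{i,1}\in\mathbb R^{|\mathcal A_i|\times|\mathcal A_1|}$; for a product policy $\pi$, $r_1(\pi)=\sum_{i\neq1}\pi_1^\top r_{1,i}\pi_i$ and $r_i(\pi)=\pi_i^\top r_{i,1}\pi_1$ for $i\neq1$. Zero-sum means $\sum_ir_i(\pi)=0$ for every product policy. A Nash equilibrium is a product policy $\pi$ with $r_i(\mu_i,\pi_{-i})\le r_i(\pi)$ for all $i$ and $\mu_i\in\Delta(\mathcal A_i)$. *)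

theory Defs
  imports Complex_Main
begin

text \<open>Each player i has a finite action set A i (all actions live in
one ambient type 'a). A mixed strategy of player i is a function p :: 'a => real that is a
probability distribution on A i (values outside A i are irrelevant).  The star-shaped game is given by the
matrices R1 i (= r_{1,i}, indexed by actions of player 1 and of player i) and Ri1 i
(= r_{i,1}).\<close>

definition is_dist :: "'a set \<Rightarrow> ('a \<Rightarrow> real) \<Rightarrow> bool" where
  "is_dist S p \<longleftrightarrow> (\<forall>a\<in>S. 0 \<le> p a) \<and> (\<Sum>a\<in>S. p a) = 1"

definition is_policy :: "nat \<Rightarrow> (nat \<Rightarrow> 'a set) \<Rightarrow> (nat \<Rightarrow> 'a \<Rightarrow> real) \<Rightarrow> bool" where
  "is_policy n A pol \<longleftrightarrow> (\<forall>i\<in>{1..n}. is_dist (A i) (pol i))"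

definition bilin :: "'a set \<Rightarrow> 'a set \<Rightarrow> ('a \<Rightarrow> 'a \<Rightarrow> real) \<Rightarrow> ('a \<Rightarrow> real) \<Rightarrow> ('a \<Rightarrow> real) \<Rightarrow> real" where
  "bilin S T M p q = (\<Sum>a\<in>S. \<Sum>b\<in>T. p a * M a b * q b)"

definition payoff :: "nat \<Rightarrow> (nat \<Rightarrow> 'a set) \<Rightarrow> (nat \<Rightarrow> 'a \<Rightarrow> 'a \<Rightarrow> real) \<Rightarrow>
    (nat \<Rightarrow> 'a \<Rightarrow> 'a \<Rightarrow> real) \<Rightarrow> nat \<Rightarrow> (nat \<Rightarrow> 'a \<Rightarrow> real) \<Rightarrow> real" where
  "payoff n A R1 Ri1 i pol =
     (if i = 1 then (\<Sum>j\<in>{2..n}. bilin (A 1) (A j) (R1 j) (pol 1) (pol j))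
      else bilin (A i) (A 1) (Ri1 i) (pol i) (pol 1))"

definition zero_sum :: "nat \<Rightarrow> (nat \<Rightarrow> 'a set) \<Rightarrow> (nat \<Rightarrow> 'a \<Rightarrow> 'a \<Rightarrow> real) \<Rightarrow>
    (nat \<Rightarrow> 'a \<Rightarrow> 'a \<Rightarrow> real) \<Rightarrow> bool" where
  "zero_sum n A R1 Ri1 \<longleftrightarrow>
     (\<forall>pol. is_policy n A pol \<longrightarrow> (\<Sum>i\<in>{1..n}. payoff n A R1 Ri1 i pol) = 0)"

definition is_nash :: "nat \<Rightarrow> (nat \<Rightarrow> 'a set) \<Rightarrow> (nat \<Rightarrow> 'a \<Rightarrow> 'a \<Rightarrow> real) \<Rightarrow>
    (nat \<Rightarrow> 'a \<Rightarrow> 'a \<Rightarrow> real) \<Rightarrow> (nat \<Rightarrow> 'a \<Rightarrow> real) \<Rightarrow> bool" where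
  "is_nash n A R1 Ri1 pol \<longleftrightarrow> is_policy n A pol \<and>
     (\<forall>i\<in>{1..n}. \<forall>mu. is_dist (A i) mu \<longrightarrow>
        payoff n A R1 Ri1 i (pol(i := mu)) \<le> payoff n A R1 Ri1 i pol)"

end

theory Submission
  imports Defs
begin

theorem proposition9:
  fixes n :: nat and A :: "nat \<Rightarrow> 'a set"
    and R1 Ri1 :: "nat \<Rightarrow> 'a \<Rightarrow> 'a \<Rightarrow> real"
    and pol pol' :: "nat \<Rightarrow> 'a \<Rightarrow> real"
  assumes "\<forall>i\<in>{1..n}. finite (A i)"
    and "zero_sum n A R1 Ri1"
    and "is_nash n A R1 Ri1 pol"
    and "is_nash n A R1 Ri1 pol'"
  shows "payoff n A R1 Ri1 1 pol = payoff n A R1 Ri1 1 pol'"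
proof (cases "n = 0")
  case True
  then show ?thesis by (simp add: payoff_def)
next
  case False
  define R where "R p q = (\<Sum>j\<in>{2..n}. bilin (A 1) (A j) (R1 j) (p 1) (q j))"
    for p q :: "nat \<Rightarrow> 'a \<Rightarrow> real"
  define G where "G p q = (\<Sum>j\<in>{2..n}. bilin (A j) (A 1) (Ri1 j) (q j) (p 1))"
    for p q :: "nat \<Rightarrow> 'a \<Rightarrow> real"
  have split: "{1..n} = insert 1 {2..n}" using False by auto
  have zs: "R p q + G p q = 0" if "p = pol \<or> p = pol'" "q = pol \<or> q = pol'" for p q
  proof -
    define s where "s = (\<lambda>i. if i = 1 then p 1 else q i)"
    have "is_policy n A s" using that assms(3,4)
      by (auto simp: s_def is_policy_def is_nash_def)
    then have "(\<Sum>i\<in>{1..n}. payoff n A R1 Ri1 i s) = 0"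
      using assms(2) by (simp add: zero_sum_def)
    moreover have "(\<Sum>i\<in>{1..n}. payoff n A R1 Ri1 i s) = R p q + G p q"
      unfolding split by (simp add: payoff_def R_def G_def s_def)
    ultimately show ?thesis by simp
  qed
  have nash1: "R q p \<le> R p p" if "is_nash n A R1 Ri1 p" "is_nash n A R1 Ri1 q" for p q
  proof -
    have "is_dist (A 1) (q 1)" using that(2) False by (auto simp: is_nash_def is_policy_def)
    then have "payoff n A R1 Ri1 1 (p(1 := q 1)) \<le> payoff n A R1 Ri1 1 p"
      using that(1) False by (auto simp: is_nash_def)
    moreover have "payoff n A R1 Ri1 1 (p(1 := q 1)) = R q p"
      by (simp add: payoff_def R_def)
    moreover have "payoff n A R1 Ri1 1 p = R p p"
      by (simp add: payoff_def R_def)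
    ultimately show ?thesis by simp
  qed
  have nash2: "G p q \<le> G p p" if "is_nash n A R1 Ri1 p" "is_nash n A R1 Ri1 q" for p q
    unfolding G_def
  proof (rule sum_mono)
    fix j assume j: "j \<in> {2..n}"
    have "is_dist (A j) (q j)" using that(2) j by (auto simp: is_nash_def is_policy_def)
    then have "payoff n A R1 Ri1 j (p(j := q j)) \<le> payoff n A R1 Ri1 j p"
      using that(1) j by (auto simp: is_nash_def)
    then show "bilin (A j) (A 1) (Ri1 j) (q j) (p 1) \<le> bilin (A j) (A 1) (Ri1 j) (p j) (p 1)"
      using j by (simp add: payoff_def)
  qed
  have a: "R pol' pol \<le> R pol pol" using nash1 assms(3,4) by blast
  have b: "R pol pol' \<le> R pol' pol'" using nash1 assms(3,4) by blast
  have c: "G pol pol' \<le> G pol pol" using nash2 assms(3,4) by blast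
  have d: "G pol' pol \<le> G pol' pol'" using nash2 assms(3,4) by blast
  have e1: "R pol pol + G pol pol = 0" by (rule zs) auto
  have e2: "R pol' pol' + G pol' pol' = 0" by (rule zs) auto
  have e3: "R pol pol' + G pol pol' = 0" by (rule zs) auto
  have e4: "R pol' pol + G pol' pol = 0" by (rule zs) auto
  have "R pol pol = R pol' pol'" using a b c d e1 e2 e3 e4 by linarith
  then show ?thesis by (simp add: payoff_def R_def)
qed

end
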